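(* Let $G=\{1,\dots,d\}^2$ and run the following randomized procedure. Initialize $S=\emptyset$, $B=\emptyset$, $\mathsf{Flag}=x$. Sample $g\in G$ uniformly at random and set $B=\{g\}$, $S=\{g\}$. Then, while $S\ne G$, sample $g=(g_x,g_y)\in G$ uniformly at random (independently) and: if $\mathsf{Flag}=x$, $g_x\in S_x$ and $g\notin S$, set $B=B\cup\{g\}$, $S=S\cup(S_x\times\{g_y\})$, $\mathsf{Flag}=y$; if $\mathsf{Flag}=y$, $g_y\in S_y$ and $g\notin S$, set $B=B\cup\{g\}$, $S=S\cup(\{g_x\}\times S_y)$, $\mathsf{Flag}=x$; otherwise do nothing. Here $S_x$ (resp. $S_y$) is the set of first (resp. second) coordinates appearing in $S$. Then for $c>0$: if the number of sampled groups is greater than $8cd\log d$, then $G\subseteq\mathsf{DAff}(B)$ with probability greater than or equal to $1-\frac1c$.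
   Context: For $z=(z_1,z_2)\in G$, $\sigma(z)\in\{0,1\}^{2d}$ is the concatenation of the one-hot encodings of $z_1$ and $z_2$. For a finite $\mathcal{A}=\{z^{(1)},\dots,z^{(k)}\}\subseteq G$, $\mathsf{DAff}(\mathcal{A})=\{z\in G:\exists\alpha\in\mathbb{R}^k,\ \sum_i\alpha_i=1,\ \sigma(z)=\sum_i\alpha_i\sigma(z^{(i)})\}$. *)

theory Defs
  imports "HOL-Probability.Probability"
begin

definition grid :: "nat \<Rightarrow> (nat \<times> nat) set" where
  "grid d = {1..d} \<times> {1..d}"

text \<open>sigma(z): concatenation of the one-hot encodings of z1 and z2, as a vector
  indexed by two disjoint copies of {1..d} (Inl i: first block, Inr i: second block).\<close>
definition sigma :: "nat \<times> nat \<Rightarrow> nat + nat \<Rightarrow> real" where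
  "sigma z j = (case j of Inl i \<Rightarrow> (if i = fst z then 1 else 0)
                        | Inr i \<Rightarrow> (if i = snd z then 1 else 0))"

definition DAff :: "nat \<Rightarrow> (nat \<times> nat) set \<Rightarrow> (nat \<times> nat) set" where
  "DAff d A = {z \<in> grid d. \<exists>\<alpha> :: nat \<times> nat \<Rightarrow> real.
       (\<Sum>a\<in>A. \<alpha> a) = 1 \<and> (\<forall>j. sigma z j = (\<Sum>a\<in>A. \<alpha> a * sigma a j))}"

text \<open>State of the procedure: (S, B, Flag), Flag = True meaning Flag = x.\<close>
type_synonym state = "(nat \<times> nat) set \<times> (nat \<times> nat) set \<times> bool"

definition upd :: "state \<Rightarrow> nat \<times> nat \<Rightarrow> state" where
  "upd st g = (case st of (S, B, fl) \<Rightarrow>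
     if fl \<and> fst g \<in> fst ` S \<and> g \<notin> S then (S \<union> (fst ` S \<times> {snd g}), insert g B, False)
     else if \<not> fl \<and> snd g \<in> snd ` S \<and> g \<notin> S then (S \<union> ({fst g} \<times> snd ` S), insert g B, True)
     else (S, B, fl))"

definition step :: "nat \<Rightarrow> state \<Rightarrow> state pmf" where
  "step d st = (if fst st = grid d then return_pmf st
                else map_pmf (upd st) (pmf_of_set (grid d)))"

text \<open>Distribution of the state after the initial sample and n loop iterations.\<close>
fun proc :: "nat \<Rightarrow> nat \<Rightarrow> state pmf" where
  "proc d 0 = map_pmf (\<lambda>g. ({g}, {g}, True)) (pmf_of_set (grid d))"
| "proc d (Suc n) = bind_pmf (proc d n) (step d)"

end

theory Submission
  imports Defs "HOL-Analysis.Harmonic_Numbers"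
begin

lemma DAff_mono:
  assumes "finite B'" "B \<subseteq> B'"
  shows "DAff d B \<subseteq> DAff d B'"
proof
  fix z assume "z \<in> DAff d B"
  then obtain \<alpha> where z: "z \<in> grid d" "(\<Sum>a\<in>B. \<alpha> a) = 1"
      "\<forall>j. sigma z j = (\<Sum>a\<in>B. \<alpha> a * sigma a j)"
    unfolding DAff_def by blast
  define \<beta> where "\<beta> a = (if a \<in> B then \<alpha> a else 0)" for a
  have eqB: "B' \<inter> B = B" using assms by blast
  have "(\<Sum>a\<in>B'. \<beta> a) = 1"
    unfolding \<beta>_def using sum.inter_restrict[OF assms(1), of \<alpha> B] z eqB by simp
  moreover have "\<forall>j. sigma z j = (\<Sum>a\<in>B'. \<beta> a * sigma a j)"
  proof
    fix j
    have "(\<Sum>a\<in>B'. \<beta> a * sigma a j) = (\<Sum>a\<in>B'. if a \<in> B then \<alpha> a * sigma a j else 0)"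
      unfolding \<beta>_def by (rule sum.cong) auto
    also have "\<dots> = (\<Sum>a\<in>B. \<alpha> a * sigma a j)"
      using sum.inter_restrict[OF assms(1), of "\<lambda>a. \<alpha> a * sigma a j" B] eqB by simp
    finally show "sigma z j = (\<Sum>a\<in>B'. \<beta> a * sigma a j)" using z by simp
  qed
  ultimately show "z \<in> DAff d B'" using z unfolding DAff_def by blast
qed

lemma DAff_comb:
  assumes "z1 \<in> DAff d B" "z2 \<in> DAff d B" "z3 \<in> DAff d B" "z \<in> grid d"
    "\<And>j. sigma z j = sigma z1 j + sigma z2 j - sigma z3 j"
  shows "z \<in> DAff d B"
proof -
  obtain a1 where 1: "(\<Sum>a\<in>B. a1 a) = 1" "\<forall>j. sigma z1 j = (\<Sum>a\<in>B. a1 a * sigma a j)"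
    using assms(1) unfolding DAff_def by blast
  obtain a2 where 2: "(\<Sum>a\<in>B. a2 a) = 1" "\<forall>j. sigma z2 j = (\<Sum>a\<in>B. a2 a * sigma a j)"
    using assms(2) unfolding DAff_def by blast
  obtain a3 where 3: "(\<Sum>a\<in>B. a3 a) = 1" "\<forall>j. sigma z3 j = (\<Sum>a\<in>B. a3 a * sigma a j)"
    using assms(3) unfolding DAff_def by blast
  define \<beta> where "\<beta> a = a1 a + a2 a - a3 a" for a
  have "(\<Sum>a\<in>B. \<beta> a) = 1" unfolding \<beta>_def
    using 1 2 3 by (simp add: sum.distrib sum_subtractf)
  moreover have "\<forall>j. sigma z j = (\<Sum>a\<in>B. \<beta> a * sigma a j)"
  proof
    fix j
    have "(\<Sum>a\<in>B. \<beta> a * sigma a j) = (\<Sum>a\<in>B. a1 a * sigma a j) + (\<Sum>a\<in>B. a2 a * sigma a j)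
        - (\<Sum>a\<in>B. a3 a * sigma a j)"
      unfolding \<beta>_def by (simp add: algebra_simps sum.distrib sum_subtractf)
    then show "sigma z j = (\<Sum>a\<in>B. \<beta> a * sigma a j)" using 1 2 3 assms(5) by simp
  qed
  ultimately show ?thesis using assms(4) unfolding DAff_def by blast
qed

lemma DAff_self:
  assumes "finite B" "g \<in> B" "g \<in> grid d"
  shows "g \<in> DAff d B"
proof -
  define \<beta> where "\<beta> a = (if a = g then 1 else (0::real))" for a
  have "(\<Sum>a\<in>B. \<beta> a) = 1" unfolding \<beta>_def using assms by simp
  moreover have "\<forall>j. sigma g j = (\<Sum>a\<in>B. \<beta> a * sigma a j)"
  proof
    fix j
    have "(\<Sum>a\<in>B. \<beta> a * sigma a j) = (\<Sum>a\<in>B. if a = g then sigma g j else 0)"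
      unfolding \<beta>_def by (rule sum.cong) auto
    then show "sigma g j = (\<Sum>a\<in>B. \<beta> a * sigma a j)" using assms by simp
  qed
  ultimately show ?thesis using assms unfolding DAff_def by blast
qed

definition good_st :: "nat \<Rightarrow> state \<Rightarrow> bool" where
  "good_st d st = (case st of (S, B, fl) \<Rightarrow> \<exists>A C. S = A \<times> C \<and> A \<subseteq> {1..d} \<and> C \<subseteq> {1..d}
     \<and> A \<noteq> {} \<and> card C = (if fl then card A else Suc (card A)) \<and> finite B \<and> S \<subseteq> DAff d B)"

lemma upd_good:
  assumes "good_st d st" "g \<in> grid d"
  shows "good_st d (upd st g)"
proof -
  obtain S B fl where st: "st = (S, B, fl)" by (cases st) auto
  obtain A C where AC: "S = A \<times> C" "A \<subseteq> {1..d}" "C \<subseteq> {1..d}" "A \<noteq> {}"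
     "card C = (if fl then card A else Suc (card A))" "finite B" "S \<subseteq> DAff d B"
    using assms(1) unfolding good_st_def st by auto
  have fA: "finite A" "finite C" using AC finite_subset by blast+
  have Cne: "C \<noteq> {}" using AC fA by (cases fl) auto
  have gg: "fst g \<in> {1..d}" "snd g \<in> {1..d}" using assms(2) unfolding grid_def by auto
  have fS: "fst ` S = A" "snd ` S = C" using AC Cne by auto
  have fB: "finite (insert g B)" using AC by simp
  have old: "S \<subseteq> DAff d (insert g B)" using AC(7) DAff_mono[OF fB, of B d] by blast
  have gin: "g \<in> DAff d (insert g B)" using DAff_self[OF fB _ assms(2)] by simp
  show ?thesis
  proof (cases "fl \<and> fst g \<in> fst ` S \<and> g \<notin> S")
    case True
    then have u: "upd st g = (A \<times> insert (snd g) C, insert g B, False)"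
      unfolding upd_def st using fS AC(1) by auto
    have ng: "snd g \<notin> C" using True AC(1) fS by (cases g) auto
    obtain y0 where y0: "y0 \<in> C" using Cne by blast
    have new: "(x, snd g) \<in> DAff d (insert g B)" if "x \<in> A" for x
    proof (rule DAff_comb[of g d _ "(x, y0)" "(fst g, y0)"])
      show "(x, y0) \<in> DAff d (insert g B)" using old AC(1) that y0 by blast
      show "(fst g, y0) \<in> DAff d (insert g B)" using old AC(1) True fS y0 by blast
      show "g \<in> DAff d (insert g B)" by (rule gin)
      show "(x, snd g) \<in> grid d" using that AC(2) gg unfolding grid_def by auto
      show "sigma (x, snd g) j = sigma g j + sigma (x, y0) j - sigma (fst g, y0) j" for j
        by (auto simp: sigma_def split: sum.split)
    qed
    have "A \<times> insert (snd g) C \<subseteq> DAff d (insert g B)"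
      using old AC(1) new by auto
    moreover have "card (insert (snd g) C) = Suc (card A)"
      using ng fA AC(5) True by simp
    ultimately show ?thesis unfolding u good_st_def prod.case
      apply (rule_tac x=A in exI)
      apply (rule_tac x="insert (snd g) C" in exI)
      using AC gg fB by simp
  next
    case F1: False
    show ?thesis
    proof (cases "\<not> fl \<and> snd g \<in> snd ` S \<and> g \<notin> S")
      case True
      then have u: "upd st g = (insert (fst g) A \<times> C, insert g B, True)"
        unfolding upd_def st using fS AC(1) F1 by auto
      have ng: "fst g \<notin> A" using True AC(1) fS by (cases g) auto
      obtain x0 where x0: "x0 \<in> A" using AC by blast
      have new: "(fst g, y) \<in> DAff d (insert g B)" if "y \<in> C" for y
      proof (rule DAff_comb[of g d _ "(x0, y)" "(x0, snd g)"])
        show "(x0, y) \<in> DAff d (insert g B)" using old AC(1) that x0 by blast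
        show "(x0, snd g) \<in> DAff d (insert g B)" using old AC(1) True fS x0 by blast
        show "g \<in> DAff d (insert g B)" by (rule gin)
        show "(fst g, y) \<in> grid d" using that AC(3) gg unfolding grid_def by auto
        show "sigma (fst g, y) j = sigma g j + sigma (x0, y) j - sigma (x0, snd g) j" for j
          by (auto simp: sigma_def split: sum.split)
      qed
      have "insert (fst g) A \<times> C \<subseteq> DAff d (insert g B)"
        using old AC(1) new by auto
      moreover have "card C = card (insert (fst g) A)"
        using ng fA AC(5) True by simp
      ultimately show ?thesis unfolding u good_st_def prod.case
        apply (rule_tac x="insert (fst g) A" in exI)
        apply (rule_tac x=C in exI)
        using AC gg fB by simp
    next
      case False
      then have "upd st g = st" unfolding upd_def st using F1 st by auto
      then show ?thesis using assms(1) by simp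
    qed
  qed
qed


definition wx :: "nat \<Rightarrow> nat \<Rightarrow> real" where
  "wx d j = real d ^ 2 / (real j * real (d - j))"
definition wy :: "nat \<Rightarrow> nat \<Rightarrow> real" where
  "wy d j = real d ^ 2 / (real (Suc j) * real (d - j))"
definition Phx :: "nat \<Rightarrow> nat \<Rightarrow> real" where
  "Phx d k = (\<Sum>j\<in>{k..<d}. wx d j + wy d j)"
definition Phy :: "nat \<Rightarrow> nat \<Rightarrow> real" where
  "Phy d k = Phx d (Suc k) + wy d k"
definition pot :: "nat \<Rightarrow> state \<Rightarrow> real" where
  "pot d st = (if snd (snd st) then Phx d (card (fst ` fst st)) else Phy d (card (fst ` fst st)))"

lemma wx_nn: "wx d j \<ge> 0" unfolding wx_def by simp
lemma wy_nn: "wy d j \<ge> 0" unfolding wy_def by simp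
lemma Phx_nn: "Phx d k \<ge> 0" unfolding Phx_def by (intro sum_nonneg add_nonneg_nonneg wx_nn wy_nn)
lemma Phy_nn: "Phy d k \<ge> 0" unfolding Phy_def using Phx_nn wy_nn by (simp add: add_nonneg_nonneg)
lemma pot_nn: "pot d st \<ge> 0" unfolding pot_def using Phx_nn Phy_nn by simp

lemma Phx_Suc: "k < d \<Longrightarrow> Phx d k = wx d k + Phy d k"
  unfolding Phx_def Phy_def by (simp add: sum.atLeast_Suc_lessThan)

lemma Phx_d: "Phx d d = 0" unfolding Phx_def by simp

lemma wx_ge1: assumes "1 \<le> k" "k < d" shows "wx d k \<ge> 1"
proof -
  have "real k * real (d - k) \<le> real d ^ 2"
  proof -
    have "k * (d - k) \<le> d * d" using assms by (intro mult_mono) auto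
    then have "real (k * (d - k)) \<le> real (d * d)" by (simp only: of_nat_le_iff)
    then show ?thesis by (simp only: of_nat_mult power2_eq_square)
  qed
  moreover have "real k * real (d - k) > 0" using assms by simp
  ultimately show ?thesis unfolding wx_def by (simp only: le_divide_eq_1_pos)
qed

lemma wy_ge1: assumes "k < d" shows "wy d k \<ge> 1"
proof -
  have "real (Suc k) * real (d - k) \<le> real d ^ 2"
  proof -
    have "Suc k * (d - k) \<le> d * d" using assms by (intro mult_mono) auto
    then have "real (Suc k * (d - k)) \<le> real (d * d)" by (simp only: of_nat_le_iff)
    then show ?thesis by (simp only: of_nat_mult power2_eq_square)
  qed
  moreover have "real (Suc k) * real (d - k) > 0" using assms by simp
  ultimately show ?thesis unfolding wy_def by (simp only: le_divide_eq_1_pos)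
qed

lemma avg_two:
  assumes "finite G" "Gd \<subseteq> G" "G \<noteq> {}" "\<And>g. g \<in> G \<Longrightarrow> f g = (if g \<in> Gd then a else b)"
  shows "(\<integral>g. f g \<partial>measure_pmf (pmf_of_set G)) =
     (real (card Gd) * a + (real (card G) - real (card Gd)) * b) / real (card G)"
proof -
  have "(\<integral>g. f g \<partial>measure_pmf (pmf_of_set G)) = sum f G / card G"
    using assms by (simp add: integral_pmf_of_set)
  also have "sum f G = (\<Sum>g\<in>G. if g \<in> Gd then a else b)" by (rule sum.cong[OF refl]) (simp add: assms(4))
  also have "\<dots> = real (card Gd) * a + real (card (G - Gd)) * b"
    using assms(1,2) by (simp add: sum.If_cases Int_absorb1 Diff_eq[symmetric])
  also have "real (card (G - Gd)) = real (card G) - real (card Gd)"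
    using assms(1,2) by (simp add: card_Diff_subset finite_subset of_nat_diff card_mono)
  finally show ?thesis .
qed

lemma alg_avg:
  fixes q D P :: real
  assumes "q > 0" "D > 0"
  shows "(q * P + (D - q) * (D / q + P)) / D = D / q + P - 1"
proof -
  have "q * P + (D - q) * (D / q + P) = D * (D / q + P - 1)"
    using assms by (simp add: field_simps)
  then show ?thesis using assms by simp
qed

lemma card_grid: "card (grid d) = d * d" unfolding grid_def by (simp add: card_cartesian_product)

lemma exp_step:
  assumes "good_st d st" "fst st \<noteq> grid d"
  shows "(\<integral>g. pot d (upd st g) \<partial>measure_pmf (pmf_of_set (grid d))) = pot d st - 1"
proof -
  obtain S B fl where st: "st = (S, B, fl)" by (cases st) auto
  obtain A C where AC: "S = A \<times> C" "A \<subseteq> {1..d}" "C \<subseteq> {1..d}" "A \<noteq> {}"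
     "card C = (if fl then card A else Suc (card A))" "finite B" "S \<subseteq> DAff d B"
    using assms(1) unfolding good_st_def st by auto
  have fA: "finite A" "finite C" using AC finite_subset by blast+
  have Cne: "C \<noteq> {}" using AC fA by (cases fl) auto
  have fS: "fst ` S = A" "snd ` S = C" using AC Cne by auto
  define k where "k = card A"
  have k1: "1 \<le> k" using AC fA unfolding k_def by (simp add: Suc_le_eq card_gt_0_iff)
  have cAd: "card A \<le> d" "card C \<le> d" using card_mono[OF _ AC(2)] card_mono[OF _ AC(3)] by auto
  have d1: "d \<ge> 1" using k1 cAd k_def by linarith
  have gfin: "finite (grid d)" "grid d \<noteq> {}" unfolding grid_def using d1 by auto
  have cg: "real (card (grid d)) = real d * real d" by (simp add: card_grid)
  have dpos: "real d > 0" using d1 by simp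
  show ?thesis
  proof (cases fl)
    case True
    have kd: "k < d"
    proof (rule ccontr)
      assume "\<not> k < d"
      then have "card A = d" "card C = d" using cAd AC(5) True k_def by auto
      then have "A = {1..d}" "C = {1..d}" using AC(2,3) card_subset_eq[of "{1..d}"] by auto
      then show False using assms(2) st AC(1) unfolding grid_def by simp
    qed
    define Gd where "Gd = A \<times> ({1..d} - C)"
    have Gsub: "Gd \<subseteq> grid d" unfolding Gd_def grid_def using AC by auto
    have cGd: "card Gd = k * (d - k)"
      unfolding Gd_def k_def using AC True fA
      by (simp add: card_cartesian_product card_Diff_subset)
    have pu: "pot d (upd st g) = (if g \<in> Gd then Phy d k else Phx d k)" if "g \<in> grid d" for g
    proof (cases "g \<in> Gd")
      case True
      then have "fst g \<in> A" "g \<notin> S" "snd g \<in> {1..d}" using AC(1) unfolding Gd_def by auto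
      then have "upd st g = (A \<times> C \<union> A \<times> {snd g}, insert g B, False)"
        unfolding upd_def st using fS AC(1) \<open>fl\<close> by auto
      moreover have "fst ` (A \<times> C \<union> A \<times> {snd g}) = A" unfolding image_Un using Cne by simp
      ultimately show ?thesis using True Cne unfolding pot_def k_def by simp
    next
      case False
      then have "\<not> (fst g \<in> A \<and> g \<notin> S)" using AC(1) that unfolding Gd_def grid_def
        by (cases g) auto
      then have "upd st g = st" unfolding upd_def st using fS \<open>fl\<close> by auto
      then show ?thesis using False \<open>fl\<close> fS unfolding pot_def k_def st by simp
    qed
    have "(\<integral>g. pot d (upd st g) \<partial>measure_pmf (pmf_of_set (grid d)))
        = (real (card Gd) * Phy d k + (real (card (grid d)) - real (card Gd)) * Phx d k) / real (card (grid d))"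
      by (rule avg_two[OF gfin(1) Gsub gfin(2) pu])
    also have "\<dots> = Phx d k - 1"
    proof -
      have p: "real (card Gd) = real k * (real d - real k)" using cGd kd by (simp add: of_nat_diff)
      have pp: "real k * (real d - real k) > 0" using k1 kd by simp
      have w: "Phx d k = real d ^ 2 / (real k * (real d - real k)) + Phy d k"
        using Phx_Suc[OF kd] kd unfolding wx_def by (simp add: of_nat_diff)
      show ?thesis unfolding p cg w using alg_avg[OF pp, of "real d * real d"] dpos
        by (simp add: power2_eq_square)
    qed
    also have "\<dots> = pot d st - 1" unfolding pot_def st k_def using True fS by simp
    finally show ?thesis .
  next
    case False
    have kd: "k < d" using cAd AC(5) False k_def by auto
    define Gd where "Gd = ({1..d} - A) \<times> C"
    have Gsub: "Gd \<subseteq> grid d" unfolding Gd_def grid_def using AC by auto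
    have cGd: "card Gd = (d - k) * Suc k"
      unfolding Gd_def k_def using AC False fA
      by (simp add: card_cartesian_product card_Diff_subset)
    have pu: "pot d (upd st g) = (if g \<in> Gd then Phx d (Suc k) else Phy d k)" if "g \<in> grid d" for g
    proof (cases "g \<in> Gd")
      case True
      then have "snd g \<in> C" "g \<notin> S" "fst g \<notin> A" using AC(1) unfolding Gd_def by auto
      then have "upd st g = (A \<times> C \<union> {fst g} \<times> C, insert g B, True)"
        unfolding upd_def st using fS AC(1) \<open>\<not>fl\<close> by auto
      moreover have "fst ` (A \<times> C \<union> {fst g} \<times> C) = insert (fst g) A" unfolding image_Un using Cne by auto
      ultimately show ?thesis using True Cne \<open>fst g \<notin> A\<close> fA unfolding pot_def k_def by simp
    next
      case False
      then have "\<not> (snd g \<in> C \<and> g \<notin> S)" using AC(1) that unfolding Gd_def grid_def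
        by (cases g) auto
      then have "upd st g = st" unfolding upd_def st using fS \<open>\<not>fl\<close> by auto
      then show ?thesis using False \<open>\<not>fl\<close> fS unfolding pot_def k_def st by simp
    qed
    have "(\<integral>g. pot d (upd st g) \<partial>measure_pmf (pmf_of_set (grid d)))
        = (real (card Gd) * Phx d (Suc k) + (real (card (grid d)) - real (card Gd)) * Phy d k) / real (card (grid d))"
      by (rule avg_two[OF gfin(1) Gsub gfin(2) pu])
    also have "\<dots> = Phy d k - 1"
    proof -
      have p: "real (card Gd) = (real d - real k) * (real k + 1)" unfolding cGd of_nat_mult of_nat_Suc of_nat_diff[OF less_imp_le[OF kd]] by simp
      have pp: "(real d - real k) * (real k + 1) > 0" using k1 kd by simp
      have w: "Phy d k = real d ^ 2 / ((real d - real k) * (real k + 1)) + Phx d (Suc k)"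
        unfolding Phy_def wy_def using kd by (simp add: of_nat_diff mult.commute)
      show ?thesis unfolding p cg w using alg_avg[OF pp, of "real d * real d"] dpos
        by (simp add: power2_eq_square)
    qed
    also have "\<dots> = pot d st - 1" unfolding pot_def st k_def using False fS by simp
    finally show ?thesis .
  qed
qed


definition NT :: "nat \<Rightarrow> state set" where "NT d = {st. fst st \<noteq> grid d}"

lemma good_grid_ne: assumes "good_st d st" shows "grid d \<noteq> {}"
proof -
  obtain S B fl where st: "st = (S, B, fl)" by (cases st) auto
  obtain A where A: "A \<subseteq> {1..d}" "A \<noteq> {}"
    using assms unfolding good_st_def st by auto
  then have "d \<ge> 1" by auto
  then show ?thesis unfolding grid_def by auto
qed

lemma grid_fin: "finite (grid d)" unfolding grid_def by simp

lemma good_term_pot: assumes "good_st d st" "fst st = grid d" shows "pot d st = 0"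
proof -
  obtain S B fl where st: "st = (S, B, fl)" by (cases st) auto
  obtain A C where AC: "S = A \<times> C" "A \<subseteq> {1..d}" "C \<subseteq> {1..d}" "A \<noteq> {}"
     "card C = (if fl then card A else Suc (card A))"
    using assms(1) unfolding good_st_def st by auto
  have "A \<times> C = {1..d} \<times> {1..d}" using assms(2) st AC(1) unfolding grid_def by simp
  moreover have "finite A" using AC(2) finite_subset by blast
  then have "C \<noteq> {}" using AC(4,5) by (cases fl) auto
  ultimately have "A = {1..d}" "C = {1..d}" using AC(4) by (auto simp: times_eq_iff)
  then have "fl" using AC(5) by (cases fl) auto
  then show ?thesis unfolding pot_def st using AC \<open>A = {1..d}\<close> \<open>C = {1..d}\<close> by (simp add: Phx_d)
qed

lemma pot_ge1: assumes "good_st d st" "fst st \<noteq> grid d" shows "pot d st \<ge> 1"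
proof -
  have "0 \<le> (\<integral>g. pot d (upd st g) \<partial>measure_pmf (pmf_of_set (grid d)))"
    by (rule integral_nonneg_AE) (simp add: pot_nn)
  then show ?thesis using exp_step[OF assms] by simp
qed

lemma step_good: assumes "good_st d st" "st' \<in> set_pmf (step d st)" shows "good_st d st'"
  using assms upd_good[OF assms(1)] good_grid_ne[OF assms(1)] grid_fin
  unfolding step_def by (auto split: if_splits)

lemma step_pot: assumes "good_st d st"
  shows "(\<integral>\<^sup>+x. ennreal (pot d x) \<partial>measure_pmf (step d st)) + indicator (NT d) st = ennreal (pot d st)"
proof (cases "fst st = grid d")
  case True
  then show ?thesis unfolding step_def NT_def by (simp add: pot_nn)
next
  case False
  have ne: "grid d \<noteq> {}" by (rule good_grid_ne[OF assms])
  have "(\<integral>\<^sup>+x. ennreal (pot d x) \<partial>measure_pmf (step d st))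
      = (\<integral>\<^sup>+g. ennreal (pot d (upd st g)) \<partial>measure_pmf (pmf_of_set (grid d)))"
    unfolding step_def using False by simp
  also have "\<dots> = ennreal (\<integral>g. pot d (upd st g) \<partial>measure_pmf (pmf_of_set (grid d)))"
    by (rule nn_integral_eq_integral)
      (auto intro!: integrable_measure_pmf_finite simp: ne grid_fin pot_nn)
  also have "\<dots> = ennreal (pot d st - 1)" using exp_step[OF assms False] by simp
  moreover have "ennreal (pot d st - 1) + ennreal 1 = ennreal (pot d st - 1 + 1)"
    using pot_ge1[OF assms False] by (intro ennreal_plus[symmetric]) auto
  ultimately show ?thesis using False unfolding NT_def by simp
qed

lemma step_ind:
  "(\<integral>\<^sup>+x. indicator (NT d) x \<partial>measure_pmf (step d st)) \<le> indicator (NT d) st"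
proof (cases "fst st = grid d")
  case True
  then show ?thesis unfolding step_def NT_def by simp
next
  case False
  have "(\<integral>\<^sup>+x. indicator (NT d) x \<partial>measure_pmf (step d st)) = emeasure (measure_pmf (step d st)) (NT d)"
    by simp
  also have "\<dots> \<le> 1" by (rule measure_pmf.emeasure_le_1)
  finally show ?thesis using False unfolding NT_def by simp
qed

lemma proc0_good: "st \<in> set_pmf (proc d 0) \<Longrightarrow> d \<ge> 1 \<Longrightarrow> good_st d st"
proof -
  assume st: "st \<in> set_pmf (proc d 0)" and d: "d \<ge> 1"
  have ne: "grid d \<noteq> {}" unfolding grid_def using d by auto
  from st obtain g where g: "g \<in> grid d" "st = ({g}, {g}, True)"
    using ne grid_fin by auto
  have "{g} \<subseteq> DAff d {g}" using DAff_self[of "{g}" g d] g by simp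
  then show ?thesis unfolding good_st_def g(2) prod.case
    apply (rule_tac x="{fst g}" in exI)
    apply (rule_tac x="{snd g}" in exI)
    using g(1) unfolding grid_def by auto
qed

lemma proc0_pot: "d \<ge> 1 \<Longrightarrow> (\<integral>\<^sup>+x. ennreal (pot d x) \<partial>measure_pmf (proc d 0)) = ennreal (Phx d 1)"
proof -
  assume d: "d \<ge> 1"
  have ne: "grid d \<noteq> {}" unfolding grid_def using d by auto
  have "(\<integral>\<^sup>+x. ennreal (pot d x) \<partial>measure_pmf (proc d 0))
       = (\<integral>\<^sup>+g. ennreal (Phx d 1) \<partial>measure_pmf (pmf_of_set (grid d)))"
    by (simp add: pot_def)
  also have "\<dots> = ennreal (Phx d 1)" by simp
  finally show ?thesis .
qed

lemma main_ind:
  assumes d: "d \<ge> 1"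
  shows "(\<forall>st\<in>set_pmf (proc d n). good_st d st) \<and>
    (\<integral>\<^sup>+x. ennreal (pot d x) \<partial>measure_pmf (proc d n))
      + of_nat n * (\<integral>\<^sup>+x. indicator (NT d) x \<partial>measure_pmf (proc d n)) \<le> ennreal (Phx d 1)"
proof (induction n)
  case 0
  then show ?case using proc0_good proc0_pot d by simp
next
  case (Suc n)
  let ?M = "proc d n"
  let ?E = "\<integral>\<^sup>+x. ennreal (pot d x) \<partial>measure_pmf ?M"
  let ?P = "\<integral>\<^sup>+x. indicator (NT d) x \<partial>measure_pmf ?M"
  let ?E' = "\<integral>\<^sup>+x. ennreal (pot d x) \<partial>measure_pmf (proc d (Suc n))"
  let ?P' = "\<integral>\<^sup>+x. indicator (NT d) x \<partial>measure_pmf (proc d (Suc n))"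
  have good: "\<forall>st\<in>set_pmf ?M. good_st d st" using Suc by blast
  have good': "\<forall>st\<in>set_pmf (proc d (Suc n)). good_st d st"
    using good step_good by (auto simp: set_bind_pmf)
  have P': "?P' \<le> ?P"
    unfolding proc.simps nn_integral_bind_pmf by (rule nn_integral_mono, rule step_ind)
  have "?E' + ?P = (\<integral>\<^sup>+x. (\<integral>\<^sup>+y. ennreal (pot d y) \<partial>measure_pmf (step d x)) \<partial>measure_pmf ?M) + ?P"
    by simp
  also have "\<dots> = (\<integral>\<^sup>+x. ((\<integral>\<^sup>+y. ennreal (pot d y) \<partial>measure_pmf (step d x)) + indicator (NT d) x) \<partial>measure_pmf ?M)"
    by (rule nn_integral_add[symmetric]) auto
  also have "\<dots> = ?E"
    by (rule nn_integral_cong_AE, rule AE_pmfI) (use good step_pot in blast)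
  finally have EP: "?E' + ?P = ?E" .
  have "?E' + of_nat (Suc n) * ?P' \<le> ?E' + of_nat (Suc n) * ?P"
    by (intro add_left_mono mult_left_mono P') auto
  also have "\<dots> = (?E' + ?P) + of_nat n * ?P" by (simp add: algebra_simps)
  also have "\<dots> = ?E + of_nat n * ?P" using EP by simp
  also have "\<dots> \<le> ennreal (Phx d 1)" using Suc by blast
  finally show ?case using good' by blast
qed


lemma harm_bound: assumes "d \<ge> (1::nat)" shows "harm (d - 1) \<le> 2 * ln (real d)"
proof -
  consider "d = 1" | "d = 2" | "d \<ge> 3" using assms by linarith
  then show ?thesis
  proof cases
    case 1 then show ?thesis by (simp add: harm_def)
  next
    case 2
    have e: "exp (1/2::real) * exp (1/2) = exp 1" by (simp add: exp_add[symmetric])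
    have "exp (1/2::real) ^ 2 \<le> 2 ^ 2" using exp_le e by (simp add: power2_eq_square)
    then have "exp (1/2::real) \<le> 2" by (rule power2_le_imp_le) simp
    then have "ln (exp (1/2::real)) \<le> ln 2" by (subst ln_le_cancel_iff) auto
    then have "1/2 \<le> ln (2::real)" by simp
    then show ?thesis using 2 by (simp add: harm_def)
  next
    case 3
    have "decseq (\<lambda>n. harm (Suc n) - ln (real (Suc n)))" by (rule decseq_harm_diff_ln)
    then have "harm (Suc (d - 2)) - ln (real (Suc (d - 2))) \<le> harm (Suc 0) - ln (real (Suc 0))"
      unfolding decseq_def by blast
    moreover have "Suc (d - 2) = d - 1" using 3 by simp
    ultimately have h: "harm (d - 1) \<le> 1 + ln (real (d - 1))" by (simp add: harm_def)
    have "ln (real (d - 1)) \<le> ln (real d)" using 3 by (subst ln_le_cancel_iff) auto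
    moreover have "1 \<le> ln (real d)"
    proof -
      have "exp 1 \<le> real d" using exp_le 3 by linarith
      then have "ln (exp 1) \<le> ln (real d)" using 3 by (subst ln_le_cancel_iff) auto
      then show ?thesis by simp
    qed
    ultimately show ?thesis using h by linarith
  qed
qed

lemma Phx_bound: assumes "d \<ge> 1" shows "Phx d 1 \<le> 8 * real d * ln (real d)"
proof -
  let ?H = "\<Sum>j\<in>{1..<d}. 1 / real j"
  have "Phx d 1 \<le> (\<Sum>j\<in>{1..<d}. 2 * wx d j)"
    unfolding Phx_def
  proof (rule sum_mono)
    fix j assume j: "j \<in> {1..<d}"
    have "wy d j \<le> wx d j" unfolding wy_def wx_def
      using j by (intro divide_left_mono mult_right_mono) auto
    then show "wx d j + wy d j \<le> 2 * wx d j" by simp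
  qed
  also have "\<dots> = (\<Sum>j\<in>{1..<d}. 2 * real d * (1 / real j + 1 / real (d - j)))"
  proof (rule sum.cong[OF refl])
    fix j assume j: "j \<in> {1..<d}"
    then have "real j > 0" "real d - real j > 0" by auto
    then show "2 * wx d j = 2 * real d * (1 / real j + 1 / real (d - j))"
      unfolding wx_def using j by (simp add: of_nat_diff field_simps power2_eq_square)
  qed
  also have "\<dots> = 2 * real d * (?H + (\<Sum>j\<in>{1..<d}. 1 / real (d - j)))"
    unfolding sum.distrib[symmetric] sum_distrib_left ..
  also have "(\<Sum>j\<in>{1..<d}. 1 / real (d - j)) = ?H"
    by (rule sum.reindex_bij_witness[of _ "\<lambda>j. d - j" "\<lambda>j. d - j"]) auto
  also have "?H = harm (d - 1)"
  proof -
    have "{1..<d} = {1..d-1}" using assms by auto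
    then show ?thesis unfolding harm_def by (simp add: divide_inverse)
  qed
  finally have "Phx d 1 \<le> 4 * real d * harm (d - 1)" by simp
  also have "\<dots> \<le> 4 * real d * (2 * ln (real d))"
    using harm_bound[OF assms] by (intro mult_left_mono) auto
  finally show ?thesis by simp
qed

theorem theorem5:
  fixes d N :: nat and c :: real
  assumes "d \<ge> 1" and "c > 0"
    and "real N > 8 * c * real d * ln (real d)"
  shows "measure_pmf.prob (proc d (N - 1)) {st. grid d \<subseteq> DAff d (fst (snd st))} \<ge> 1 - 1 / c"
proof -
  let ?M = "proc d (N - 1)"
  have lnn: "ln (real d) \<ge> 0" using assms(1) by simp
  have "8 * c * real d * ln (real d) \<ge> 0" using assms(1,2) lnn by simp
  then have Npos: "N \<ge> 1" using assms(3) by (cases N) auto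
  note MI = main_ind[OF assms(1), of "N - 1"]
  then have good: "\<forall>st\<in>set_pmf ?M. good_st d st" by blast
  let ?E = "\<integral>\<^sup>+x. ennreal (pot d x) \<partial>measure_pmf ?M"
  let ?P = "\<integral>\<^sup>+x. indicator (NT d) x \<partial>measure_pmf ?M"
  have PE: "?P \<le> ?E"
  proof (rule nn_integral_mono_AE, rule AE_pmfI)
    fix st assume "st \<in> set_pmf ?M"
    then have g: "good_st d st" using good by blast
    show "indicator (NT d) st \<le> ennreal (pot d st)"
      using pot_ge1[OF g] pot_nn[of d st] unfolding NT_def by (auto simp: indicator_def)
  qed
  have "of_nat N * ?P = ?P + of_nat (N - 1) * ?P"
    using Npos by (cases N) (auto simp: algebra_simps)
  also have "\<dots> \<le> ?E + of_nat (N - 1) * ?P" using PE by (rule add_right_mono)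
  also have "\<dots> \<le> ennreal (Phx d 1)" using MI by blast
  finally have "of_nat N * ?P \<le> ennreal (Phx d 1)" .
  moreover have "?P = ennreal (measure_pmf.prob ?M (NT d))"
    by (simp add: measure_pmf.emeasure_eq_measure)
  ultimately have "ennreal (real N * measure_pmf.prob ?M (NT d)) \<le> ennreal (Phx d 1)"
    by (simp add: ennreal_mult' ennreal_of_nat_eq_real_of_nat)
  then have NP: "real N * measure_pmf.prob ?M (NT d) \<le> Phx d 1"
    using Phx_nn by (subst (asm) ennreal_le_iff) auto
  have "c * (real N * measure_pmf.prob ?M (NT d)) < real N"
  proof -
    have "c * (real N * measure_pmf.prob ?M (NT d)) \<le> c * Phx d 1"
      using NP assms(2) by (intro mult_left_mono) auto
    also have "\<dots> \<le> c * (8 * real d * ln (real d))"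
      using Phx_bound[OF assms(1)] assms(2) by (intro mult_left_mono) auto
    also have "\<dots> < real N" using assms(3) by (simp add: mult.assoc)
    finally show ?thesis .
  qed
  then have "c * measure_pmf.prob ?M (NT d) < 1" using Npos by (simp add: algebra_simps)
  then have Pb: "measure_pmf.prob ?M (NT d) \<le> 1 / c" using assms(2)
    by (simp add: field_simps)
  have c1: "measure_pmf.prob ?M (UNIV - NT d) = 1 - measure_pmf.prob ?M (NT d)"
    using measure_pmf.prob_compl[of "NT d" ?M] by simp
  have c2: "measure_pmf.prob ?M (UNIV - NT d) = measure_pmf.prob ?M ((UNIV - NT d) \<inter> set_pmf ?M)"
    by (simp add: measure_Int_set_pmf)
  have c3: "measure_pmf.prob ?M ((UNIV - NT d) \<inter> set_pmf ?M) \<le> measure_pmf.prob ?M {st. grid d \<subseteq> DAff d (fst (snd st))}"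
  proof (rule measure_pmf.finite_measure_mono)
    show "(UNIV - NT d) \<inter> set_pmf ?M \<subseteq> {st. grid d \<subseteq> DAff d (fst (snd st))}"
    proof
      fix st assume st: "st \<in> (UNIV - NT d) \<inter> set_pmf ?M"
      then have g: "good_st d st" and t: "fst st = grid d" using good unfolding NT_def by auto
      obtain S B fl where stt: "st = (S, B, fl)" by (cases st) auto
      have "S \<subseteq> DAff d B" using g unfolding good_st_def stt by auto
      then show "st \<in> {st. grid d \<subseteq> DAff d (fst (snd st))}" using t stt by simp
    qed
  qed simp
  show ?thesis using c1 c2 c3 Pb by linarith
qed

end
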